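(* Let $\mathcal{A}$ be an alternative $W^{*}$-factor, $\mathcal{B}$ an alternative complex $\ast$-algebra, and $\Phi:\mathcal{A}\to\mathcal{B}$ a bijection preserving product $ab+ba^{*}$ (resp. $ab-ba^{*}$). Let $p_{1}\in\mathcal{A}$ be a projection with $p_{1}\neq 1_{\mathcal{A}}$, $p_{2}=1_{\mathcal{A}}-p_{1}$, and $\mathcal{A}_{ij}=p_{i}\mathcal{A}p_{j}$. Then for all $a_{12},b_{12}\in\mathcal{A}_{12}$ and $c_{21},d_{21}\in\mathcal{A}_{21}$: (i) $\Phi(a_{12}+b_{12})=\Phi(a_{12})+\Phi(b_{12})$ and (ii) $\Phi(c_{21}+d_{21})=\Phi(c_{21})+\Phi(d_{21})$.
   Context: An alternative $W^{*}$-factor is a prime alternative $C^{*}$-algebra (complete normed alternative complex $\ast$-algebra with $\|a^{*}a\|=\|a\|^{2}$) that is a dual Banach space; it is unital. A projection is a nonzero self-adjoint idempotent. $\mathcal{A}_{ij}$ are the Peirce components with respect to $p_{1}$. $\Phi$ preserves product $ab+ba^{*}$ (resp. $ab-ba^{*}$) if $\Phi(ab+ba^{*})=\Phi(a)\Phi(b)+\Phi(b)\Phi(a)^{*}$ (resp. $\Phi(ab-ba^{*})=\Phi(a)\Phi(b)-\Phi(b)\Phi(a)^{*}$) for all $a,b\in\mathcal{A}$. *)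

theory Defs
  imports "HOL-Analysis.Analysis"
begin

definition complex_vs :: "(complex \<Rightarrow> 'a::ab_group_add \<Rightarrow> 'a) \<Rightarrow> bool" where
  "complex_vs sc \<longleftrightarrow>
     (\<forall>c x y. sc c (x + y) = sc c x + sc c y) \<and>
     (\<forall>c d x. sc (c + d) x = sc c x + sc d x) \<and>
     (\<forall>c d x. sc c (sc d x) = sc (c * d) x) \<and>
     (\<forall>x. sc 1 x = x)"

definition alt_star_alg ::
  "(complex \<Rightarrow> 'a::ab_group_add \<Rightarrow> 'a) \<Rightarrow> ('a \<Rightarrow> 'a \<Rightarrow> 'a) \<Rightarrow> ('a \<Rightarrow> 'a) \<Rightarrow> bool" where
  "alt_star_alg sc mul st \<longleftrightarrow>
     complex_vs sc \<and>
     (\<forall>x y z. mul (x + y) z = mul x z + mul y z) \<and>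
     (\<forall>x y z. mul x (y + z) = mul x y + mul x z) \<and>
     (\<forall>c x y. mul (sc c x) y = sc c (mul x y)) \<and>
     (\<forall>c x y. mul x (sc c y) = sc c (mul x y)) \<and>
     (\<forall>x y. mul (mul x x) y = mul x (mul x y)) \<and>
     (\<forall>x y. mul (mul y x) x = mul y (mul x x)) \<and>
     (\<forall>x y. st (x + y) = st x + st y) \<and>
     (\<forall>c x. st (sc c x) = sc (cnj c) (st x)) \<and>
     (\<forall>x. st (st x) = x) \<and>
     (\<forall>x y. st (mul x y) = mul (st y) (st x))"

definition complex_normed_sc :: "(complex \<Rightarrow> 'a::real_normed_vector \<Rightarrow> 'a) \<Rightarrow> bool" where
  "complex_normed_sc sc \<longleftrightarrow>
     complex_vs sc \<and>
     (\<forall>r x. sc (complex_of_real r) x = r *\<^sub>R x) \<and>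
     (\<forall>c x. norm (sc c x) = cmod c * norm x)"

definition alt_cstar_alg ::
  "(complex \<Rightarrow> 'a::banach \<Rightarrow> 'a) \<Rightarrow> ('a \<Rightarrow> 'a \<Rightarrow> 'a) \<Rightarrow> ('a \<Rightarrow> 'a) \<Rightarrow> bool" where
  "alt_cstar_alg sc mul st \<longleftrightarrow>
     alt_star_alg sc mul st \<and> complex_normed_sc sc \<and>
     (\<forall>x y. norm (mul x y) \<le> norm x * norm y) \<and>
     (\<forall>x. norm (mul (st x) x) = (norm x)\<^sup>2)"

definition alg_ideal ::
  "(complex \<Rightarrow> 'a::ab_group_add \<Rightarrow> 'a) \<Rightarrow> ('a \<Rightarrow> 'a \<Rightarrow> 'a) \<Rightarrow> 'a set \<Rightarrow> bool" where
  "alg_ideal sc mul I \<longleftrightarrow>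
     0 \<in> I \<and> (\<forall>x\<in>I. \<forall>y\<in>I. x + y \<in> I) \<and> (\<forall>c. \<forall>x\<in>I. sc c x \<in> I) \<and>
     (\<forall>x\<in>I. \<forall>a. mul a x \<in> I \<and> mul x a \<in> I)"

definition prime_alg ::
  "(complex \<Rightarrow> 'a::ab_group_add \<Rightarrow> 'a) \<Rightarrow> ('a \<Rightarrow> 'a \<Rightarrow> 'a) \<Rightarrow> bool" where
  "prime_alg sc mul \<longleftrightarrow>
     (\<forall>I J. alg_ideal sc mul I \<and> alg_ideal sc mul J \<and> (\<forall>x\<in>I. \<forall>y\<in>J. mul x y = 0)
        \<longrightarrow> I = {0} \<or> J = {0})"

definition bdd_cfunctional ::
  "(complex \<Rightarrow> 'p::real_normed_vector \<Rightarrow> 'p) \<Rightarrow> ('p \<Rightarrow> complex) \<Rightarrow> bool" where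
  "bdd_cfunctional scP f \<longleftrightarrow>
     (\<forall>x y. f (x + y) = f x + f y) \<and> (\<forall>c x. f (scP c x) = c * f x) \<and>
     (\<exists>K. \<forall>x. cmod (f x) \<le> K * norm x)"

definition dual_iso ::
  "(complex \<Rightarrow> 'a::real_normed_vector \<Rightarrow> 'a) \<Rightarrow> (complex \<Rightarrow> 'p::real_normed_vector \<Rightarrow> 'p)
    \<Rightarrow> ('a \<Rightarrow> 'p \<Rightarrow> complex) \<Rightarrow> bool" where
  "dual_iso scA scP T \<longleftrightarrow>
     complex_normed_sc scP \<and>
     (\<forall>x. bdd_cfunctional scP (T x)) \<and>
     (\<forall>f. bdd_cfunctional scP f \<longrightarrow> (\<exists>x. T x = f)) \<and>
     (\<forall>x y. T (x + y) = (\<lambda>p. T x p + T y p)) \<and>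
     (\<forall>c x. T (scA c x) = (\<lambda>p. c * T x p)) \<and>
     (\<forall>x. onorm (T x) = norm x)"

definition is_projection :: "('a::zero \<Rightarrow> 'a \<Rightarrow> 'a) \<Rightarrow> ('a \<Rightarrow> 'a) \<Rightarrow> 'a \<Rightarrow> bool" where
  "is_projection mul st p \<longleftrightarrow> p \<noteq> 0 \<and> st p = p \<and> mul p p = p"

definition peirce :: "('a \<Rightarrow> 'a \<Rightarrow> 'a) \<Rightarrow> 'a \<Rightarrow> 'a \<Rightarrow> 'a set" where
  "peirce mul p q = {mul p (mul x q) | x. True}"

end

theory Submission
  imports Defs
begin

locale aa =
  fixes sc :: "complex \<Rightarrow> 'a::ab_group_add \<Rightarrow> 'a" and mul :: "'a \<Rightarrow> 'a \<Rightarrow> 'a"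
    and st :: "'a \<Rightarrow> 'a" and one :: 'a
  assumes alg: "alt_star_alg sc mul st" and unit: "\<forall>x. mul one x = x \<and> mul x one = x"
begin


lemma sc_add_r: "sc c (x+y) = sc c x + sc c y" using alg unfolding alt_star_alg_def complex_vs_def by auto
lemma sc_add_l: "sc (c+d) x = sc c x + sc d x" using alg unfolding alt_star_alg_def complex_vs_def by auto
lemma sc_sc: "sc c (sc d x) = sc (c*d) x" using alg unfolding alt_star_alg_def complex_vs_def by auto
lemma sc_one[simp]: "sc 1 x = x" using alg unfolding alt_star_alg_def complex_vs_def by auto
lemma mul_add_l: "mul (x+y) z = mul x z + mul y z" using alg unfolding alt_star_alg_def by auto
lemma mul_add_r: "mul x (y+z) = mul x y + mul x z" using alg unfolding alt_star_alg_def by auto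
lemma mul_sc_l: "mul (sc c x) y = sc c (mul x y)" using alg unfolding alt_star_alg_def by auto
lemma mul_sc_r: "mul x (sc c y) = sc c (mul x y)" using alg unfolding alt_star_alg_def by auto
lemma alt_l: "mul (mul x x) y = mul x (mul x y)" using alg unfolding alt_star_alg_def by auto
lemma alt_r: "mul (mul y x) x = mul y (mul x x)" using alg unfolding alt_star_alg_def by auto
lemma st_add: "st (x+y) = st x + st y" using alg unfolding alt_star_alg_def by auto
lemma st_sc: "st (sc c x) = sc (cnj c) (st x)" using alg unfolding alt_star_alg_def by auto
lemma st_st[simp]: "st (st x) = x" using alg unfolding alt_star_alg_def by auto
lemma st_mul: "st (mul x y) = mul (st y) (st x)" using alg unfolding alt_star_alg_def by auto
lemma one_l[simp]: "mul one x = x" using unit by blast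
lemma one_r[simp]: "mul x one = x" using unit by blast

lemma sc_zero_r[simp]: "sc c 0 = 0" using sc_add_r[of c 0 0] by simp
lemma sc_zero_l[simp]: "sc 0 x = 0" using sc_add_l[of 0 0 x] by simp
lemma sc_minus_r: "sc c (- x) = - sc c x" using sc_add_r[of c x "-x"] by (simp add: eq_neg_iff_add_eq_0 add.commute)
lemma sc_diff_r: "sc c (x - y) = sc c x - sc c y" using sc_add_r[of c x "-y"] sc_minus_r by simp
lemma sc_minus_one: "sc (-1) x = - x" using sc_add_l[of 1 "-1" x] by (simp add: eq_neg_iff_add_eq_0 add.commute)
lemma mul_zero_l[simp]: "mul 0 x = 0" using mul_add_l[of 0 0 x] by simp
lemma mul_zero_r[simp]: "mul x 0 = 0" using mul_add_r[of x 0 0] by simp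
lemma mul_minus_l: "mul (- x) y = - mul x y" using mul_add_l[of x "-x" y] by (simp add: eq_neg_iff_add_eq_0 add.commute)
lemma mul_minus_r: "mul x (- y) = - mul x y" using mul_add_r[of x y "-y"] by (simp add: eq_neg_iff_add_eq_0 add.commute)
lemma mul_diff_l: "mul (x - y) z = mul x z - mul y z" using mul_add_l[of x "-y" z] mul_minus_l by simp
lemma mul_diff_r: "mul x (y - z) = mul x y - mul x z" using mul_add_r[of x y "-z"] mul_minus_r by simp
lemma st_zero[simp]: "st 0 = 0" using st_add[of 0 0] by simp
lemma st_minus: "st (- x) = - st x" using st_add[of x "-x"] by (simp add: eq_neg_iff_add_eq_0 add.commute)
lemma st_diff: "st (x - y) = st x - st y" using st_add[of x "-y"] st_minus by simp
lemma st_one[simp]: "st one = one"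
proof -
  have "st (st one) = st (mul (st one) one)" by simp
  also have "\<dots> = mul (st one) (st (st one))" by (simp only: st_mul)
  finally show ?thesis by simp
qed

lemmas ring = mul_add_l mul_add_r mul_diff_l mul_diff_r mul_minus_l mul_minus_r
  mul_sc_l mul_sc_r st_add st_diff st_minus st_sc st_mul sc_add_r sc_diff_r sc_minus_r

lemma lin_l: "mul (mul x y) z + mul (mul y x) z = mul x (mul y z) + mul y (mul x z)"
  using alt_l[of "x+y" z] alt_l[of x z] alt_l[of y z] by (simp add: mul_add_l mul_add_r algebra_simps)
lemma lin_r: "mul (mul z x) y + mul (mul z y) x = mul z (mul x y) + mul z (mul y x)"
  using alt_r[of z "x+y"] alt_r[of z x] alt_r[of z y] by (simp add: mul_add_l mul_add_r algebra_simps)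
lemma flex: "mul (mul x y) x = mul x (mul y x)"
  using lin_r[of x y x] alt_l[of x y] by simp

definition proj where "proj p \<longleftrightarrow> st p = p \<and> mul p p = p"
definition C11 where "C11 p x \<longleftrightarrow> mul p x = x \<and> mul x p = x"
definition C12 where "C12 p x \<longleftrightarrow> mul p x = x \<and> mul x p = 0"
definition pi11 where "pi11 p x = mul p (mul x p)"
definition pi12 where "pi12 p x = mul p x - mul p (mul x p)"

lemma proj_q: "proj p \<Longrightarrow> proj (one - p)"
  unfolding proj_def by (simp add: ring)
lemma qq: "one - (one - p) = p" by simp

lemma ppl: "proj p \<Longrightarrow> mul p (mul p x) = mul p x" using alt_l[of p x] unfolding proj_def by simp
lemma ppr: "proj p \<Longrightarrow> mul (mul x p) p = mul x p" using alt_r[of x p] unfolding proj_def by simp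

lemma st_pl: "proj p \<Longrightarrow> mul p (st x) = st (mul x p)" by (simp add: proj_def st_mul)
lemma st_pr: "proj p \<Longrightarrow> mul (st x) p = st (mul p x)" by (simp add: proj_def st_mul)

lemma C11_q: "C11 (one - p) x \<longleftrightarrow> mul p x = 0 \<and> mul x p = 0"
  unfolding C11_def by (auto simp: ring)
lemma C12_q: "C12 (one - p) x \<longleftrightarrow> mul p x = 0 \<and> mul x p = x"
  unfolding C12_def by (auto simp: ring)

lemma pi11_C11: "proj p \<Longrightarrow> C11 p (pi11 p x)"
proof -
  assume p: "proj p"
  have "mul (mul p (mul x p)) p = mul (mul (mul p x) p) p" by (simp add: flex)
  also have "\<dots> = mul (mul p x) p" by (rule ppr[OF p])
  also have "\<dots> = mul p (mul x p)" by (simp add: flex)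
  finally show ?thesis unfolding C11_def pi11_def using ppl[OF p] by simp
qed
lemma pi12_C12: "proj p \<Longrightarrow> C12 p (pi12 p x)"
  using pi11_C11[of p x] unfolding C11_def C12_def pi11_def pi12_def
  by (simp add: ppl ring flex)

lemma decomp: "x = pi11 p x + pi12 p x + pi12 (one - p) x + pi11 (one - p) x"
  unfolding pi11_def pi12_def by (simp add: ring algebra_simps)

lemma C11_pi: "C11 p x \<Longrightarrow> pi11 p x = x \<and> pi12 p x = 0 \<and> pi12 (one - p) x = 0 \<and> pi11 (one - p) x = 0"
  unfolding C11_def pi11_def pi12_def by (simp add: ring)
lemma C12_pi: "C12 p x \<Longrightarrow> pi11 p x = 0 \<and> pi12 p x = x \<and> pi12 (one - p) x = 0 \<and> pi11 (one - p) x = 0"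
  unfolding C12_def pi11_def pi12_def by (simp add: ring)

lemma C11_0: "C11 p 0" unfolding C11_def by simp
lemma C12_0: "C12 p 0" unfolding C12_def by simp
lemma C11_add: "C11 p x \<Longrightarrow> C11 p y \<Longrightarrow> C11 p (x + y)" unfolding C11_def by (simp add: ring)
lemma C12_add: "C12 p x \<Longrightarrow> C12 p y \<Longrightarrow> C12 p (x + y)" unfolding C12_def by (simp add: ring)
lemma C11_sc: "C11 p x \<Longrightarrow> C11 p (sc c x)" unfolding C11_def by (simp add: ring)
lemma C12_sc: "C12 p x \<Longrightarrow> C12 p (sc c x)" unfolding C12_def by (simp add: ring)
lemma C11_st: "proj p \<Longrightarrow> C11 p x \<Longrightarrow> C11 p (st x)" unfolding C11_def by (simp add: st_pl st_pr)
lemma C12_st: "proj p \<Longrightarrow> C12 p x \<Longrightarrow> C12 (one - p) (st x)" unfolding C12_q unfolding C12_def by (simp add: st_pl st_pr)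

lemma C12_mul: "C12 p a \<Longrightarrow> C12 p b \<Longrightarrow> C12 (one - p) (mul a b)"
  unfolding C12_q using lin_l[of p a b] lin_r[of a b p] unfolding C12_def by simp
lemma C11_mul: "proj p \<Longrightarrow> C12 p a \<Longrightarrow> C12 p b \<Longrightarrow> C11 p (mul b (st a))"
proof -
  assume p: "proj p" and a: "C12 p a" and b: "C12 p b"
  have c: "mul p (st a) = 0" "mul (st a) p = st a" using C12_st[OF p a] unfolding C12_q by auto
  show ?thesis unfolding C11_def using lin_l[of p b "st a"] lin_r[of b "st a" p] b c unfolding C12_def by simp
qed

lemma peirce_C12: "proj p \<Longrightarrow> a \<in> peirce mul p (one - p) \<Longrightarrow> C12 p a"
proof -
  assume p: "proj p" and "a \<in> peirce mul p (one - p)"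
  then obtain x where a: "a = mul p (mul x (one - p))" unfolding peirce_def by auto
  have "mul (mul x (one - p)) p = 0" using ppr[OF p, of x] by (simp add: ring)
  then show ?thesis unfolding C12_def a using ppl[OF p] flex[of p "mul x (one - p)"] by simp
qed


lemma pi11_add: "pi11 p (x + y) = pi11 p x + pi11 p y" unfolding pi11_def by (simp add: ring)
lemma pi12_add: "pi12 p (x + y) = pi12 p x + pi12 p y" unfolding pi12_def by (simp add: ring)
lemma pi11_0[simp]: "pi11 p 0 = 0" unfolding pi11_def by simp
lemma pi12_0[simp]: "pi12 p 0 = 0" unfolding pi12_def by simp

definition zz where "zz l m p = sc l p + sc m (one - p)"
lemma zz_sym: "zz l m p = zz m l (one - p)" unfolding zz_def by (simp add: add.commute)

end

locale mn = aa sc mul st one for sc :: "complex \<Rightarrow> 'a::ab_group_add \<Rightarrow> 'a" and mul st one +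
  fixes e :: complex and circB :: "'b::ab_group_add \<Rightarrow> 'b \<Rightarrow> 'b" and Phi :: "'a \<Rightarrow> 'b"
  assumes e: "e = 1 \<or> e = -1"
  and cB1: "circB u (v + w) = circB u v + circB u w"
  and cB2: "circB (u + v) w = circB u w + circB v w"
  and bij: "bij Phi"
  and pres: "Phi (mul x y + sc e (mul y (st x))) = circB (Phi x) (Phi y)"
begin

definition circ where "circ x y = mul x y + sc e (mul y (st x))"

lemma pres': "Phi (circ x y) = circB (Phi x) (Phi y)" unfolding circ_def by (rule pres)
lemma e_cnj: "cnj e = e" using e by auto
lemma circ_add_r: "circ z (x + y) = circ z x + circ z y" unfolding circ_def by (simp add: ring algebra_simps)
lemma circ_add_l: "circ (x + y) z = circ x z + circ y z" unfolding circ_def by (simp add: ring algebra_simps)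
lemma circ_0_r[simp]: "circ z 0 = 0" unfolding circ_def by simp
lemma circ_0_l[simp]: "circ 0 z = 0" unfolding circ_def by simp
lemma cB_0_r: "circB u 0 = 0" using cB1[of u 0 0] by simp
lemma cB_0_l: "circB 0 u = 0" using cB2[of 0 0 u] by simp

lemma Phi0: "Phi 0 = 0"
proof -
  obtain y where y: "Phi y = 0" using bij by (metis bij_pointE)
  have "Phi 0 = Phi (circ 0 y)" by simp
  also have "\<dots> = 0" by (simp only: pres' y cB_0_r)
  finally show ?thesis .
qed
lemma inj: "Phi x = Phi y \<Longrightarrow> x = y" using bij by (simp add: bij_def inj_def)
lemma surj: "\<exists>S. Phi S = u" using bij by (metis bij_pointE)

definition test where "test f \<longleftrightarrow> (\<forall>x y. f (x+y) = f x + f y) \<and>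
   (\<exists>g. (\<forall>x. Phi (f x) = g (Phi x)) \<and> (\<forall>u v. g (u+v) = g u + g v))"

lemma test_l: "test (circ z)"
  unfolding test_def using circ_add_r pres' cB1 by blast
lemma test_r: "test (\<lambda>x. circ x w)"
  unfolding test_def apply (intro conjI)
  using circ_add_l apply blast
  apply (rule exI[of _ "\<lambda>u. circB u (Phi w)"]) using pres' cB2 by blast
lemma test_comp: "test f \<Longrightarrow> test g \<Longrightarrow> test (\<lambda>x. f (g x))"
proof -
  assume f: "test f" and g: "test g"
  from f obtain F where F: "\<forall>x. Phi (f x) = F (Phi x)" "\<forall>u v. F (u+v) = F u + F v" unfolding test_def by blast
  from g obtain G where G: "\<forall>x. Phi (g x) = G (Phi x)" "\<forall>u v. G (u+v) = G u + G v" unfolding test_def by blast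
  show ?thesis unfolding test_def
    apply (intro conjI)
    using f g unfolding test_def apply simp
    apply (rule exI[of _ "\<lambda>u. F (G u)"]) using F G by simp
qed
lemma test_0: "test f \<Longrightarrow> f 0 = 0"
  unfolding test_def by (metis add_cancel_right_right)
lemma transfer: "test f \<Longrightarrow> Phi S = Phi x1 + Phi x2 + Phi x3 + Phi x4 \<Longrightarrow>
   Phi (f S) = Phi (f x1) + Phi (f x2) + Phi (f x3) + Phi (f x4)"
  unfolding test_def by metis

lemma circ_zz_C11: "proj p \<Longrightarrow> C11 p x \<Longrightarrow> circ (zz l m p) x = sc (l + e * cnj l) x"
  unfolding circ_def zz_def C11_def proj_def by (simp add: ring sc_sc sc_add_l)
lemma circ_zz_C12: "proj p \<Longrightarrow> C12 p x \<Longrightarrow> circ (zz l m p) x = sc (l + e * cnj m) x"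
  unfolding circ_def zz_def C12_def proj_def by (simp add: ring sc_sc sc_add_l)


lemma stq: "proj p \<Longrightarrow> C11 (one - p) y \<Longrightarrow> mul p (st y) = 0 \<and> mul (st y) p = 0"
  using C11_st[OF proj_q, of p y] unfolding C11_q by simp
lemma stc12: "proj p \<Longrightarrow> C12 p y \<Longrightarrow> mul p (st y) = 0 \<and> mul (st y) p = st y"
  using C12_st[of p y] unfolding C12_q by simp
lemma stc12q: "proj p \<Longrightarrow> C12 (one - p) y \<Longrightarrow> mul p (st y) = st y \<and> mul (st y) p = 0"
  using C12_st[OF proj_q, of p y] unfolding C12_def by simp
lemma st11: "proj p \<Longrightarrow> C11 p y \<Longrightarrow> mul p (st y) = st y \<and> mul (st y) p = st y"
  using C11_st[of p y] unfolding C11_def by simp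

lemma circ_q_C11: "proj p \<Longrightarrow> C11 p y \<Longrightarrow> circ y (one - p) = 0"
  using st11[of p y] unfolding circ_def C11_def by (simp add: ring)
lemma circ_q_C12q: "proj p \<Longrightarrow> C12 (one - p) y \<Longrightarrow> circ y (one - p) = 0"
  using stc12q[of p y] unfolding circ_def C12_q by (simp add: ring)
lemma circ_q_C11q: "proj p \<Longrightarrow> C11 (one - p) y \<Longrightarrow> circ y (one - p) = y + sc e (st y)"
  using stq[of p y] unfolding circ_def C11_q by (simp add: ring)
lemma circ_p_C11q: "proj p \<Longrightarrow> C11 (one - p) w \<Longrightarrow> circ w p = 0"
  using stq[of p w] unfolding circ_def C11_q by (simp add: ring)
lemma circ_q_C12: "proj p \<Longrightarrow> C12 p y \<Longrightarrow> circ y (one - p) = y + sc e (st y)"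
  using stc12[of p y] unfolding circ_def C12_def by (simp add: ring)
lemma circ_p_after: "proj p \<Longrightarrow> C12 p y \<Longrightarrow> circ (y + sc e (st y)) p = sc e (st y) + y"
  using stc12[of p y] e_cnj e unfolding circ_def C12_def by (auto simp: ring sc_sc)

lemma C11q_circ: "proj p \<Longrightarrow> C11 (one - p) y \<Longrightarrow> C11 (one - p) (y + sc e (st y))"
  by (simp add: C11_add C11_sc C11_st proj_q)

lemma P12: "proj p \<Longrightarrow> \<exists>P. test P \<and> (\<forall>x. P x = P (pi12 p x)) \<and> (\<forall>x. pi12 p (P x) = pi12 p x)"
proof -
  assume p: "proj p"
  define P where "P x = circ (circ x (one - p)) p" for x
  have tP: "test P" unfolding P_def by (rule test_comp[OF test_r test_r])
  have add: "P (x + y) = P x + P y" for x y using tP unfolding test_def by blast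
  have z1: "P (pi11 p x) = 0" for x unfolding P_def using circ_q_C11[OF p pi11_C11[OF p]] by simp
  have z3: "P (pi12 (one - p) x) = 0" for x unfolding P_def
    using circ_q_C12q[OF p pi12_C12[OF proj_q[OF p]]] by simp
  have z4: "P (pi11 (one - p) x) = 0" for x unfolding P_def
    using circ_q_C11q[OF p pi11_C11[OF proj_q[OF p]]] circ_p_C11q[OF p C11q_circ[OF p pi11_C11[OF proj_q[OF p]]]] by simp
  have main: "P x = P (pi12 p x)" for x
    using decomp[of x p] add z1 z3 z4 by (metis add.left_neutral add.right_neutral)
  have v: "pi12 p (P y) = y" if y: "C12 p y" for y
  proof -
    have "P y = sc e (st y) + y" unfolding P_def using circ_q_C12[OF p y] circ_p_after[OF p y] by simp
    moreover have "C12 (one - p) (sc e (st y))" using C12_sc C12_st[OF p y] by blast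
    ultimately show ?thesis using C12_pi[of "one - p" "sc e (st y)"] C12_pi[OF y] by (simp add: pi12_add)
  qed
  have "pi12 p (P x) = pi12 p x" for x using main[of x] v[OF pi12_C12[OF p]] by simp
  then show ?thesis using tP main by blast
qed

lemma coef: "\<exists>l m. l + e * cnj l \<noteq> 0 \<and> m + e * cnj m = 0"
proof (cases "e = 1")
  case True then show ?thesis by (intro exI[of _ 1] exI[of _ "\<i>"]) simp
next
  case False then have "e = -1" using e by auto
  then show ?thesis by (intro exI[of _ "\<i>"] exI[of _ 1]) (simp add: complex_eq_iff)
qed

lemma P11: "proj p \<Longrightarrow> \<exists>P k. test P \<and> k \<noteq> 0 \<and> (\<forall>x. P x = sc k (pi11 p x))"
proof -
  assume p: "proj p"
  have q: "proj (one - p)" using proj_q[OF p] .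
  obtain l m where l: "l + e * cnj l \<noteq> 0" and m: "m + e * cnj m = 0" using coef by blast
  define k where "k = l + e * cnj l"
  define m1 where "m1 = - (e * cnj l)"
  have s1: "l + e * cnj m1 = 0" unfolding m1_def using e by auto
  have s2: "m1 + e * cnj l = 0" unfolding m1_def by simp
  define P where "P x = circ (zz l m p) (circ (zz l m1 p) x)" for x
  have tP: "test P" unfolding P_def by (rule test_comp[OF test_l test_l])
  have add: "P (x + y) = P x + P y" for x y using tP unfolding test_def by blast
  have v1: "P (pi11 p x) = sc (k*k) (pi11 p x)" for x
  proof -
    have a: "C11 p (pi11 p x)" by (rule pi11_C11[OF p])
    have "circ (zz l m1 p) (pi11 p x) = sc k (pi11 p x)" unfolding k_def by (rule circ_zz_C11[OF p a])
    then show ?thesis unfolding P_def using circ_zz_C11[OF p C11_sc[OF a]] by (simp add: sc_sc k_def)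
  qed
  have z2: "P (pi12 p x) = 0" for x unfolding P_def using circ_zz_C12[OF p pi12_C12[OF p]] s1 by simp
  have z3: "P (pi12 (one - p) x) = 0" for x unfolding P_def
    using circ_zz_C12[OF q pi12_C12[OF q]] s2 zz_sym[of l m1 p] by simp
  have z4: "P (pi11 (one - p) x) = 0" for x
  proof -
    have a: "C11 (one - p) (pi11 (one - p) x)" by (rule pi11_C11[OF q])
    have "circ (zz l m1 p) (pi11 (one - p) x) = sc (m1 + e * cnj m1) (pi11 (one - p) x)"
      using circ_zz_C11[OF q a] zz_sym[of l m1 p] by simp
    then show ?thesis unfolding P_def using circ_zz_C11[OF q C11_sc[OF a]] zz_sym[of l m p] m by simp
  qed
  have "P x = sc (k*k) (pi11 p x)" for x
    using decomp[of x p] add v1 z2 z3 z4 by (metis add.left_neutral add.right_neutral)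
  moreover have "k * k \<noteq> 0" using l unfolding k_def by simp
  ultimately show ?thesis using tP by blast
qed


lemma C12q_pi: "C12 (one - p) x \<Longrightarrow> pi11 p x = 0 \<and> pi12 p x = 0 \<and> pi12 (one - p) x = x \<and> pi11 (one - p) x = 0"
  using C12_pi[of "one - p" x] by simp
lemma C11q_pi: "C11 (one - p) x \<Longrightarrow> pi11 p x = 0 \<and> pi12 p x = 0 \<and> pi12 (one - p) x = 0 \<and> pi11 (one - p) x = x"
  using C11_pi[of "one - p" x] by simp

lemma match11: "proj p \<Longrightarrow> Phi S = Phi y1 + Phi y2 + Phi y3 + Phi y4 \<Longrightarrow> pi11 p y2 = 0 \<Longrightarrow>
   pi11 p y3 = 0 \<Longrightarrow> pi11 p y4 = 0 \<Longrightarrow> pi11 p S = pi11 p y1"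
proof -
  assume p: "proj p" and S: "Phi S = Phi y1 + Phi y2 + Phi y3 + Phi y4" and
    h: "pi11 p y2 = 0" "pi11 p y3 = 0" "pi11 p y4 = 0"
  obtain P k where tP: "test P" and k: "k \<noteq> 0" and P: "\<forall>x. P x = sc k (pi11 p x)" using P11[OF p] by blast
  have "Phi (P S) = Phi (P y1)" using transfer[OF tP S] P h Phi0 by simp
  then have "sc k (pi11 p S) = sc k (pi11 p y1)" using inj P by metis
  then have "sc (inverse k) (sc k (pi11 p S)) = sc (inverse k) (sc k (pi11 p y1))" by simp
  then show ?thesis using k by (simp add: sc_sc)
qed

lemma match12: "proj p \<Longrightarrow> Phi S = Phi y1 + Phi y2 + Phi y3 + Phi y4 \<Longrightarrow> pi12 p y2 = 0 \<Longrightarrow>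
   pi12 p y3 = 0 \<Longrightarrow> pi12 p y4 = 0 \<Longrightarrow> pi12 p S = pi12 p y1"
proof -
  assume p: "proj p" and S: "Phi S = Phi y1 + Phi y2 + Phi y3 + Phi y4" and
    h: "pi12 p y2 = 0" "pi12 p y3 = 0" "pi12 p y4 = 0"
  obtain P where tP: "test P" and P1: "\<forall>x. P x = P (pi12 p x)" and P2: "\<forall>x. pi12 p (P x) = pi12 p x"
    using P12[OF p] by blast
  have z: "P 0 = 0" by (rule test_0[OF tP])
  have "Phi (P S) = Phi (P y1)" using transfer[OF tP S] P1 h Phi0 z by (metis add.right_neutral)
  then have "P S = P y1" using inj by metis
  then show ?thesis using P2 by metis
qed

lemma sum4: "proj p \<Longrightarrow> C11 p x1 \<Longrightarrow> C12 p x2 \<Longrightarrow> C12 (one - p) x3 \<Longrightarrow> C11 (one - p) x4 \<Longrightarrow>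
  Phi (x1 + x2 + x3 + x4) = Phi x1 + Phi x2 + Phi x3 + Phi x4"
proof -
  assume p: "proj p" and c: "C11 p x1" "C12 p x2" "C12 (one - p) x3" "C11 (one - p) x4"
  have q: "proj (one - p)" by (rule proj_q[OF p])
  obtain S where S: "Phi S = Phi x1 + Phi x2 + Phi x3 + Phi x4" using surj by blast
  note v = C11_pi[OF c(1)] C12_pi[OF c(2)] C12q_pi[OF c(3)] C11q_pi[OF c(4)]
  have 1: "pi11 p S = x1" using match11[OF p S] v by simp
  have 2: "pi12 p S = x2" using match12[OF p, of S x2 x1 x3 x4] S v by (simp add: ac_simps)
  have 3: "pi12 (one - p) S = x3" using match12[OF q, of S x3 x1 x2 x4] S v by (simp add: ac_simps)
  have 4: "pi11 (one - p) S = x4" using match11[OF q, of S x4 x1 x2 x3] S v by (simp add: ac_simps)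
  have "S = x1 + x2 + x3 + x4" using decomp[of S p] 1 2 3 4 by simp
  then show ?thesis using S by simp
qed


lemma add12: "proj p \<Longrightarrow> C12 p a \<Longrightarrow> C12 p b \<Longrightarrow> Phi (a + b) = Phi a + Phi b"
proof -
  assume p: "proj p" and a: "C12 p a" and b: "C12 p b"
  have q: "proj (one - p)" by (rule proj_q[OF p])
  have pp: "mul p p = p" "st p = p" using p unfolding proj_def by auto
  have pC: "C11 p p" unfolding C11_def using pp by simp
  have qC: "C11 (one - p) (one - p)" unfolding C11_q using pp by (simp add: ring)
  define a' where "a' = sc e (st a)"
  define m where "m = mul a b"
  define n where "n = sc e (mul b (st a))"
  have ca': "C12 (one - p) a'" unfolding a'_def using C12_sc C12_st[OF p a] by blast
  have cm: "C12 (one - p) m" unfolding m_def using C12_mul[OF a b] .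
  have cn: "C11 p n" unfolding n_def using C11_sc C11_mul[OF p a b] by blast
  have e1: "Phi (p + a) = Phi p + Phi a" using sum4[OF p pC a C12_0 C11_0] Phi0 by simp
  have e2: "Phi ((one - p) + b) = Phi b + Phi (one - p)" using sum4[OF p C11_0 b C12_0 qC] Phi0 by (simp add: add.commute)
  have e3: "Phi (m + n) = Phi n + Phi m" using sum4[OF p cn C12_0 cm C11_0] Phi0 by (simp add: add.commute)
  have e4: "Phi (a + a') = Phi a + Phi a'" using sum4[OF p C11_0 a ca' C11_0] Phi0 by simp
  have c1: "circ p (one - p) = 0" unfolding circ_def using pp by (simp add: ring)
  have c2: "circ p b = b" unfolding circ_def using pp b unfolding C12_def by simp
  have c3: "circ a (one - p) = a + a'" unfolding a'_def by (rule circ_q_C12[OF p a])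
  have c4: "circ a b = m + n" unfolding circ_def m_def n_def ..
  have big: "circ (p + a) ((one - p) + b) = n + (a + b) + (a' + m) + 0"
    by (simp only: circ_add_l circ_add_r c1 c2 c3 c4) (simp add: algebra_simps)
  have "Phi (circ (p + a) ((one - p) + b)) = circB (Phi p + Phi a) (Phi b + Phi (one - p))"
    by (simp add: pres' e1 e2)
  also have "\<dots> = Phi (circ p b) + Phi (circ p (one - p)) + Phi (circ a b) + Phi (circ a (one - p))"
    by (simp add: cB1 cB2 pres' add.assoc)
  also have "\<dots> = Phi b + Phi n + Phi m + Phi a + Phi a'"
    using c1 c2 c3 c4 e3 e4 Phi0 by (simp add: add.assoc)
  finally have L: "Phi (circ (p + a) ((one - p) + b)) = Phi b + Phi n + Phi m + Phi a + Phi a'" .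
  have "Phi (circ (p + a) ((one - p) + b)) = Phi n + Phi (a + b) + Phi (a' + m) + Phi 0"
    unfolding big by (rule sum4[OF p cn C12_add[OF a b] C12_add[OF ca' cm] C11_0])
  with L Phi0 have E1: "Phi (a + b) + Phi (a' + m) = Phi a + Phi b + Phi a' + Phi m"
    by (simp add: algebra_simps)
  obtain T where T: "Phi T = Phi a + Phi b" using surj by blast
  obtain W where W: "Phi W = Phi a' + Phi m" using surj by blast
  note va = C12_pi[OF a] and vb = C12_pi[OF b] and va' = C12q_pi[OF ca'] and vm = C12q_pi[OF cm]
  have T': "Phi T = Phi 0 + Phi a + Phi b + Phi 0" using T Phi0 by simp
  have W': "Phi W = Phi 0 + Phi a' + Phi m + Phi 0" using W Phi0 by simp
  have t1: "pi11 p T = 0" using match11[OF p T'] va vb by simp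
  have t3: "pi12 (one - p) T = 0" using match12[OF q T'] va vb by simp
  have t4: "pi11 (one - p) T = 0" using match11[OF q T'] va vb by simp
  have TT: "T = pi12 p T" using decomp[of T p] t1 t3 t4 by simp
  have CT: "C12 p T" using TT pi12_C12[OF p, of T] by simp
  have w1: "pi11 p W = 0" using match11[OF p W'] va' vm by simp
  have w2: "pi12 p W = 0" using match12[OF p W'] va' vm by simp
  have w4: "pi11 (one - p) W = 0" using match11[OF q W'] va' vm by simp
  have WW: "W = pi12 (one - p) W" using decomp[of W p] w1 w2 w4 by simp
  have CW: "C12 (one - p) W" using WW pi12_C12[OF q, of W] by simp
  have "Phi (0 + T + W + 0) = Phi 0 + Phi T + Phi W + Phi 0" by (rule sum4[OF p C11_0 CT CW C11_0])
  moreover have "Phi (0 + (a + b) + (a' + m) + 0) = Phi 0 + Phi (a + b) + Phi (a' + m) + Phi 0"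
    by (rule sum4[OF p C11_0 C12_add[OF a b] C12_add[OF ca' cm] C11_0])
  ultimately have "Phi (a + b + (a' + m)) = Phi (T + W)" using E1 T W Phi0 by (simp add: algebra_simps)
  then have "a + b + (a' + m) = T + W" by (rule inj)
  then have "pi12 p (a + b + (a' + m)) = pi12 p (T + W)" by simp
  then have "a + b = T" using va vb va' vm C12_pi[OF CT] C12q_pi[OF CW] by (simp add: pi12_add)
  then show ?thesis using T by simp
qed

end

lemma (in mn) both: "proj p \<Longrightarrow>
   (\<forall>a\<in>peirce mul p (one - p). \<forall>b\<in>peirce mul p (one - p). Phi (a + b) = Phi a + Phi b)
 \<and> (\<forall>c\<in>peirce mul (one - p) p. \<forall>d\<in>peirce mul (one - p) p. Phi (c + d) = Phi c + Phi d)"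
proof -
  assume p: "proj p"
  have q: "proj (one - p)" by (rule proj_q[OF p])
  have 1: "\<forall>a\<in>peirce mul p (one - p). \<forall>b\<in>peirce mul p (one - p). Phi (a + b) = Phi a + Phi b"
    using add12[OF p] peirce_C12[OF p] by blast
  have 2: "\<forall>a\<in>peirce mul (one - p) (one - (one - p)). \<forall>b\<in>peirce mul (one - p) (one - (one - p)). Phi (a + b) = Phi a + Phi b"
    using add12[OF q] peirce_C12[OF q] by blast
  from 1 2 show ?thesis by simp
qed

lemma B_add:
  assumes "alt_star_alg scB mulB stB"
  shows "mulB (x + y) z = mulB x z + mulB y z" "mulB x (y + z) = mulB x y + mulB x z"
    "stB (x + y) = stB x + stB y"
  using assms unfolding alt_star_alg_def by auto

theorem claim2p6:
  fixes scA :: "complex \<Rightarrow> 'a::banach \<Rightarrow> 'a"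
    and mulA :: "'a \<Rightarrow> 'a \<Rightarrow> 'a" and stA :: "'a \<Rightarrow> 'a" and oneA :: 'a
    and scP :: "complex \<Rightarrow> 'p::real_normed_vector \<Rightarrow> 'p" and T :: "'a \<Rightarrow> 'p \<Rightarrow> complex"
    and scB :: "complex \<Rightarrow> 'b::ab_group_add \<Rightarrow> 'b"
    and mulB :: "'b \<Rightarrow> 'b \<Rightarrow> 'b" and stB :: "'b \<Rightarrow> 'b"
    and \<Phi> :: "'a \<Rightarrow> 'b" and p1 p2 :: 'a
  assumes A_cstar: "alt_cstar_alg scA mulA stA"
    and A_prime: "prime_alg scA mulA"
    and A_dual: "dual_iso scA scP T"
    and A_unit: "\<forall>x. mulA oneA x = x \<and> mulA x oneA = x"
    and B_alg: "alt_star_alg scB mulB stB"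
    and bij: "bij \<Phi>"
    and pres: "(\<forall>a b. \<Phi> (mulA a b + mulA b (stA a)) = mulB (\<Phi> a) (\<Phi> b) + mulB (\<Phi> b) (stB (\<Phi> a)))
             \<or> (\<forall>a b. \<Phi> (mulA a b - mulA b (stA a)) = mulB (\<Phi> a) (\<Phi> b) - mulB (\<Phi> b) (stB (\<Phi> a)))"
    and p1: "is_projection mulA stA p1" and p1_ne: "p1 \<noteq> oneA"
    and p2: "p2 = oneA - p1"
  shows "(\<forall>a12\<in>peirce mulA p1 p2. \<forall>b12\<in>peirce mulA p1 p2. \<Phi> (a12 + b12) = \<Phi> a12 + \<Phi> b12)
       \<and> (\<forall>c21\<in>peirce mulA p2 p1. \<forall>d21\<in>peirce mulA p2 p1. \<Phi> (c21 + d21) = \<Phi> c21 + \<Phi> d21)"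
proof -
  have aaI: "aa scA mulA stA oneA" unfolding aa_def using A_cstar A_unit unfolding alt_cstar_alg_def by blast
  interpret aa scA mulA stA oneA by (rule aaI)
  have pp: "proj p1" using p1 unfolding is_projection_def proj_def by blast
  note Bl = B_add[OF B_alg]
  from pres show ?thesis
  proof
    assume h: "\<forall>a b. \<Phi> (mulA a b + mulA b (stA a)) = mulB (\<Phi> a) (\<Phi> b) + mulB (\<Phi> b) (stB (\<Phi> a))"
    have "mn scA mulA stA oneA 1 (\<lambda>u v. mulB u v + mulB v (stB u)) \<Phi>"
      unfolding mn_def mn_axioms_def using aaI bij h by (simp add: Bl algebra_simps)
    then show ?thesis using mn.both[OF _ pp] p2 by blast
  next
    assume h: "\<forall>a b. \<Phi> (mulA a b - mulA b (stA a)) = mulB (\<Phi> a) (\<Phi> b) - mulB (\<Phi> b) (stB (\<Phi> a))"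
    have "mn scA mulA stA oneA (-1) (\<lambda>u v. mulB u v - mulB v (stB u)) \<Phi>"
      unfolding mn_def mn_axioms_def using aaI bij h by (simp add: Bl algebra_simps sc_minus_one)
    then show ?thesis using mn.both[OF _ pp] p2 by blast
  qed
qed

end
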